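(* Let $A_1,\dots,A_{12}$ be the vertices of a regular icosahedron in $\mathbb R^3$ with centre $O$, and let $\Gamma$ be a sphere centred at $O$. If $\lambda\in\mathbb R$ is such that $M\mapsto\sum_{i=1}^{12}|MA_i|^{\lambda}$ is constant on $\Gamma\setminus\{A_1,\dots,A_{12}\}$, then $\lambda\in\{0,2,4,6,8,10\}$.
   Context: $|MA|$ denotes Euclidean distance. *)

theory Defs
  imports "HOL-Analysis.Analysis"
begin

definition golden :: real where "golden = (1 + sqrt 5) / 2"

definition std_icosahedron :: "(real^3) set" where
  "std_icosahedron =
     {vector [0, s, t * golden] | s t. s \<in> {-1, 1} \<and> t \<in> {-1, 1}} \<union>
     {vector [s, t * golden, 0] | s t. s \<in> {-1, 1} \<and> t \<in> {-1, 1}} \<union>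
     {vector [t * golden, 0, s] | s t. s \<in> {-1, 1} \<and> t \<in> {-1, 1}}"

definition regular_icosahedron :: "(real^3) set \<Rightarrow> real^3 \<Rightarrow> bool" where
  "regular_icosahedron V Ctr \<longleftrightarrow>
     (\<exists>f c. orthogonal_transformation f \<and> c > 0 \<and>
            V = (\<lambda>x. Ctr + c *\<^sub>R f x) ` std_icosahedron)"

end

theory Submission
  imports Defs
begin


definition dH :: "real \<Rightarrow> real \<Rightarrow> nat \<Rightarrow> real \<Rightarrow> real" where
 "dH K \<mu> m z = (\<Prod>k<m. (\<mu> - real k)) * (-2)^m * (K - 2*z) powr (\<mu> - real m)"

lemma dH_deriv:
  assumes "K - 2*z > 0"
  shows "DERIV (dH K \<mu> m) z :> dH K \<mu> (Suc m) z"
proof -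
  have d: "DERIV (\<lambda>z. K - 2*z) z :> -2"
    by (auto intro!: derivative_eq_intros)
  have "DERIV (\<lambda>z. (K - 2*z) powr (\<mu> - real m)) z :> (\<mu> - real m) * (K - 2*z) powr (\<mu> - real m - of_nat 1) * (-2)"
    by (rule DERIV_fun_powr[OF d assms])
  then have D: "DERIV (\<lambda>z. (\<Prod>k<m. (\<mu> - real k)) * (-2)^m * (K - 2*z) powr (\<mu> - real m)) z :>
     (\<Prod>k<m. (\<mu> - real k)) * (-2)^m * ((\<mu> - real m) * (K - 2*z) powr (\<mu> - real m - of_nat 1) * (-2))"
    by (rule DERIV_cmult)
  have e: "\<mu> - real m - of_nat 1 = \<mu> - real (Suc m)" by simp
  have eq: "(\<Prod>k<m. (\<mu> - real k)) * (-2)^m * ((\<mu> - real m) * (K - 2*z) powr (\<mu> - real m - of_nat 1) * (-2))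
      = dH K \<mu> (Suc m) z"
    unfolding dH_def e by (simp add: algebra_simps)
  have hfun: "dH K \<mu> m = (\<lambda>z. (\<Prod>k<m. (\<mu> - real k)) * (-2)^m * (K - 2*z) powr (\<mu> - real m))"
    by (rule ext) (simp add: dH_def)
  show ?thesis unfolding hfun using D by (simp only: eq)
qed

lemma dH_Taylor:
  assumes "K - 2*(z + \<bar>d\<bar>) > 0"
  shows "\<exists>\<xi>. \<bar>\<xi> - z\<bar> \<le> \<bar>d\<bar> \<and>
     dH K \<mu> 0 (z + d) = (\<Sum>m<5. dH K \<mu> m z / fact m * d^m) + dH K \<mu> 5 \<xi> / fact 5 * d^5"
proof (cases "d = 0")
  case True
  then show ?thesis by (intro exI[of _ z]) (simp add: numeral_eq_Suc)
next
  case False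
  have "\<exists>t. (if z + d < z then z + d < t \<and> t < z else z < t \<and> t < z + d) \<and>
    dH K \<mu> 0 (z+d) = (\<Sum>m<5. (dH K \<mu> m z / fact m) * (z + d - z)^m) + (dH K \<mu> 5 t / fact 5) * (z + d - z)^5"
  proof (rule Taylor[where a = "z - \<bar>d\<bar>" and b = "z + \<bar>d\<bar>"])
    show "\<forall>m t. m < 5 \<and> z - \<bar>d\<bar> \<le> t \<and> t \<le> z + \<bar>d\<bar> \<longrightarrow> DERIV (dH K \<mu> m) t :> dH K \<mu> (Suc m) t"
      using assms by (auto intro!: dH_deriv)
  qed (use False in auto)
  then obtain t where t: "(if z + d < z then z + d < t \<and> t < z else z < t \<and> t < z + d)"
    "dH K \<mu> 0 (z+d) = (\<Sum>m<5. (dH K \<mu> m z / fact m) * (z + d - z)^m) + (dH K \<mu> 5 t / fact 5) * (z + d - z)^5"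
    by blast
  show ?thesis
    by (rule exI[of _ t]) (use t in \<open>auto split: if_splits\<close>)
qed

lemma dH_Taylor_diff:
  assumes "K - 2*(z + \<bar>d\<bar>) > 0"
  shows "\<exists>\<xi>1 \<xi>2. \<bar>\<xi>1 - z\<bar> \<le> \<bar>d\<bar> \<and> \<bar>\<xi>2 - z\<bar> \<le> \<bar>d\<bar> \<and>
     dH K \<mu> 0 (z + d) - dH K \<mu> 0 (z - d) = 2 * dH K \<mu> 1 z * d + dH K \<mu> 3 z * d^3 / 3
        + (dH K \<mu> 5 \<xi>1 + dH K \<mu> 5 \<xi>2) * d^5 / 120"
proof -
  obtain \<xi>1 where 1: "\<bar>\<xi>1 - z\<bar> \<le> \<bar>d\<bar>"
     "dH K \<mu> 0 (z + d) = (\<Sum>m<5. dH K \<mu> m z / fact m * d^m) + dH K \<mu> 5 \<xi>1 / fact 5 * d^5"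
    using dH_Taylor[OF assms] by blast
  have a2: "K - 2*(z + \<bar>-d\<bar>) > 0" using assms by simp
  obtain \<xi>2 where 2: "\<bar>\<xi>2 - z\<bar> \<le> \<bar>-d\<bar>"
     "dH K \<mu> 0 (z + -d) = (\<Sum>m<5. dH K \<mu> m z / fact m * (-d)^m) + dH K \<mu> 5 \<xi>2 / fact 5 * (-d)^5"
    using dH_Taylor[OF a2] by blast
  have f: "fact 5 = (120::real)" "fact 3 = (6::real)" "fact 4 = (24::real)" "fact 2 = (2::real)"
    by (simp_all add: fact_numeral)
  show ?thesis
    apply (rule exI[of _ \<xi>1], rule exI[of _ \<xi>2])
    using 1 2 by (simp add: numeral_eq_Suc f field_simps)
qed

lemma sum_lin_zero:
  fixes P :: "nat \<Rightarrow> nat \<Rightarrow> real"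
  assumes P1: "\<forall>i<5. (\<Sum>j<5. P j i) = 0" and P3: "\<forall>i<5. (\<Sum>j<5. (P j i)^3) = 0"
  shows "(\<Sum>j<5. \<Sum>i<5. c1 * P j i + c3 * (P j i)^3) = 0"
proof -
  have "(\<Sum>j<5. \<Sum>i<5. c1 * P j i + c3 * (P j i)^3) = (\<Sum>i<5. \<Sum>j<5. c1 * P j i + c3 * (P j i)^3)"
    by (rule sum.swap)
  also have "\<dots> = (\<Sum>i<5. c1 * (\<Sum>j<5. P j i) + c3 * (\<Sum>j<5. (P j i)^3))"
    by (simp add: sum.distrib sum_distrib_left)
  also have "\<dots> = 0" using P1 P3 by simp
  finally show ?thesis .
qed

lemma core:
  fixes K \<mu> G a0 \<delta> :: real and a :: "real \<Rightarrow> real" and P :: "nat \<Rightarrow> nat \<Rightarrow> real"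
  assumes G: "G > 0" and a0: "a0 > 0" and Kpos: "K - 2*a0*G > 0"
    and acont: "isCont a 0" and a00: "a 0 = a0"
    and \<delta>: "\<delta> > 0"
    and P1: "\<forall>i<5. (\<Sum>j<5. P j i) = 0" and P3: "\<forall>i<5. (\<Sum>j<5. (P j i)^3) = 0"
    and P5: "(\<Sum>j<5. \<Sum>i<5. (P j i)^5) \<noteq> 0"
    and D: "\<forall>b. 0 < b \<and> b < \<delta> \<longrightarrow> (\<Sum>j<5. \<Sum>i<5.
        (dH K \<mu> 0 (a b * G + b * P j i) - dH K \<mu> 0 (a b * G - b * P j i)) +
        (dH K \<mu> 0 (-(a b * G) + -(b * P j i)) - dH K \<mu> 0 (-(a b * G) - -(b * P j i)))) = 0"
  shows "\<mu> \<in> {0,1,2,3,4,5}"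
proof -
  define \<kappa> where "\<kappa> = K - 2*a0*G"
  have \<kappa>: "\<kappa> > 0" using Kpos \<kappa>_def by simp
  have k2: "K = \<kappa> + 2*(a0*G)" unfolding \<kappa>_def by simp
  define B where "B = (\<Sum>j<5. \<Sum>i<5. \<bar>P j i\<bar>)"
  have PB: "\<bar>P j i\<bar> \<le> B" if "j < 5" "i < 5" for j i
  proof -
    have "\<bar>P j i\<bar> \<le> (\<Sum>i<5. \<bar>P j i\<bar>)"
      by (rule member_le_sum) (use that in auto)
    also have "\<dots> \<le> B" unfolding B_def
      by (rule member_le_sum[where f="\<lambda>j. \<Sum>i<5. \<bar>P j i\<bar>"]) (use that in \<open>auto intro: sum_nonneg\<close>)
    finally show ?thesis .
  qed
  have B0: "B \<ge> 0" unfolding B_def by (auto intro!: sum_nonneg)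
  have alim: "(a \<longlongrightarrow> a0) (at_right 0)"
    using acont a00 unfolding isCont_def by (metis tendsto_mono at_le subset_UNIV)
  define R where "R b \<longleftrightarrow> 0 < b \<and> b < \<delta> \<and> \<bar>a b - a0\<bar> < \<kappa> / (4*G) \<and> b * (B+1) < \<kappa>/4" for b
  have evR: "eventually R (at_right 0)"
  proof -
    have e1: "eventually (\<lambda>b. \<bar>a b - a0\<bar> < \<kappa> / (4*G)) (at_right 0)"
      using tendstoD[OF alim, of "\<kappa> / (4*G)"] \<kappa> G by (simp add: dist_real_def)
    have e2: "eventually (\<lambda>b. b \<in> {0<..<min \<delta> (\<kappa> / (4*(B+1)))}) (at_right 0)"
      by (rule eventually_at_right_real) (use \<delta> \<kappa> B0 in simp)
    show ?thesis using e1 e2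
    proof eventually_elim
      case (elim b)
      then have "b * (B+1) < \<kappa> / (4*(B+1)) * (B+1)"
        using B0 by (intro mult_strict_right_mono) auto
      moreover have "\<kappa> / (4*(B+1)) * (B+1) = \<kappa>/4" using B0 by (simp add: field_simps)
      ultimately have "b * (B+1) < \<kappa>/4" by linarith
      then show ?case using elim unfolding R_def by auto
    qed
  qed
  let ?H = "dH K \<mu>"
  define T where "T b j i q \<longleftrightarrow>
     (let z = a b * G; d = b * P j i; \<xi>1 = fst q; \<xi>2 = fst (snd q); \<xi>3 = fst (snd (snd q)); \<xi>4 = snd (snd (snd q)) in
      \<bar>\<xi>1 - z\<bar> \<le> \<bar>d\<bar> \<and> \<bar>\<xi>2 - z\<bar> \<le> \<bar>d\<bar> \<and> \<bar>\<xi>3 - -z\<bar> \<le> \<bar>d\<bar> \<and> \<bar>\<xi>4 - -z\<bar> \<le> \<bar>d\<bar> \<and>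
      ?H 0 (z + d) - ?H 0 (z - d) = 2 * ?H 1 z * d + ?H 3 z * d^3 / 3 + (?H 5 \<xi>1 + ?H 5 \<xi>2) * d^5 / 120 \<and>
      ?H 0 (-z + -d) - ?H 0 (-z - -d) = 2 * ?H 1 (-z) * (-d) + ?H 3 (-z) * (-d)^3 / 3 + (?H 5 \<xi>3 + ?H 5 \<xi>4) * (-d)^5 / 120)"
    for b j i q
  have ex: "\<forall>b j i. \<exists>q. R b \<and> j < 5 \<and> i < 5 \<longrightarrow> T b j i q"
  proof (intro allI)
    fix b j i
    show "\<exists>q. R b \<and> j < 5 \<and> i < 5 \<longrightarrow> T b j i q"
    proof (cases "R b \<and> j < 5 \<and> i < 5")
      case False then show ?thesis by blast
    next
      case True
      then have Rb: "R b" and ji: "j < 5" "i < 5" by auto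
      define z where "z = a b * G"
      define d where "d = b * P j i"
      have dB: "\<bar>d\<bar> \<le> b * B" unfolding d_def using PB[OF ji] Rb unfolding R_def
        by (auto simp: abs_mult intro: mult_left_mono)
      have bB: "b * B < \<kappa>/4" using Rb B0 unfolding R_def by (smt (verit) mult_left_mono)
      have az: "\<bar>z\<bar> < a0 * G + \<kappa>/4"
      proof -
        have "\<bar>a b\<bar> < a0 + \<kappa> / (4*G)" using Rb a0 unfolding R_def by linarith
        then have "\<bar>a b\<bar> * G < (a0 + \<kappa> / (4*G)) * G" using G by (intro mult_strict_right_mono) auto
        moreover have "(a0 + \<kappa> / (4*G)) * G = a0*G + \<kappa>/4" using G by (simp add: field_simps)
        moreover have "\<bar>z\<bar> = \<bar>a b\<bar> * G" unfolding z_def using G by (simp add: abs_mult)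
        ultimately show ?thesis by linarith
      qed
      have "2*z + 2*\<bar>d\<bar> < K" using az dB bB k2 abs_ge_self[of z] by linarith
      then have c1: "K - 2*(z + \<bar>d\<bar>) > 0" by (simp add: algebra_simps)
      have "2*(-z) + 2*\<bar>d\<bar> < K" using az dB bB k2 abs_ge_minus_self[of z] by linarith
      then have c2: "K - 2*(-z + \<bar>-d\<bar>) > 0" by (simp add: algebra_simps)
      obtain \<xi>1 \<xi>2 where x12: "\<bar>\<xi>1 - z\<bar> \<le> \<bar>d\<bar>" "\<bar>\<xi>2 - z\<bar> \<le> \<bar>d\<bar>"
        "?H 0 (z + d) - ?H 0 (z - d) = 2 * ?H 1 z * d + ?H 3 z * d^3 / 3 + (?H 5 \<xi>1 + ?H 5 \<xi>2) * d^5 / 120"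
        using dH_Taylor_diff[OF c1] by blast
      obtain \<xi>3 \<xi>4 where x34: "\<bar>\<xi>3 - -z\<bar> \<le> \<bar>-d\<bar>" "\<bar>\<xi>4 - -z\<bar> \<le> \<bar>-d\<bar>"
        "?H 0 (-z + -d) - ?H 0 (-z - -d) = 2 * ?H 1 (-z) * (-d) + ?H 3 (-z) * (-d)^3 / 3 + (?H 5 \<xi>3 + ?H 5 \<xi>4) * (-d)^5 / 120"
        using dH_Taylor_diff[OF c2] by blast
      show ?thesis
        by (rule exI[of _ "(\<xi>1, \<xi>2, \<xi>3, \<xi>4)"])
           (use x12 x34 in \<open>simp add: T_def Let_def z_def d_def\<close>)
    qed
  qed
  then obtain Q where Q: "\<And>b j i. R b \<Longrightarrow> j < 5 \<Longrightarrow> i < 5 \<Longrightarrow> T b j i (Q b j i)"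
    by metis
  define X1 where "X1 b j i = fst (Q b j i)" for b j i
  define X2 where "X2 b j i = fst (snd (Q b j i))" for b j i
  define X3 where "X3 b j i = fst (snd (snd (Q b j i)))" for b j i
  define X4 where "X4 b j i = snd (snd (snd (Q b j i)))" for b j i
  define E where "E b = (\<Sum>j<5. \<Sum>i<5. (?H 5 (X1 b j i) + ?H 5 (X2 b j i)) * (P j i)^5
        - (?H 5 (X3 b j i) + ?H 5 (X4 b j i)) * (P j i)^5)" for b
  have E0ev: "eventually (\<lambda>b. E b = 0) (at_right 0)"
    using evR
  proof eventually_elim
    case (elim b)
    have Tb: "T b j i (Q b j i)" if "j < 5" "i < 5" for j i using Q[OF elim that] .
    let ?z = "a b * G"
    have split: "(dH K \<mu> 0 (a b * G + b * P j i) - dH K \<mu> 0 (a b * G - b * P j i)) +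
        (dH K \<mu> 0 (-(a b * G) + -(b * P j i)) - dH K \<mu> 0 (-(a b * G) - -(b * P j i)))
      = ((2 * ?H 1 ?z * b - 2 * ?H 1 (-?z) * b) * P j i + (?H 3 ?z * b^3 / 3 - ?H 3 (-?z) * b^3/3) * (P j i)^3)
        + b^5 / 120 * ((?H 5 (X1 b j i) + ?H 5 (X2 b j i)) * (P j i)^5
        - (?H 5 (X3 b j i) + ?H 5 (X4 b j i)) * (P j i)^5)"
      if "j < 5" "i < 5" for j i
    proof -
      have e: "?H 0 (a b * G + b * P j i) - ?H 0 (a b * G - b * P j i) = 2 * ?H 1 ?z * (b * P j i) + ?H 3 ?z * (b * P j i)^3 / 3 + (?H 5 (X1 b j i) + ?H 5 (X2 b j i)) * (b * P j i)^5 / 120"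
          "?H 0 (-(a b * G) + -(b * P j i)) - ?H 0 (-(a b * G) - -(b * P j i)) = 2 * ?H 1 (-?z) * (-(b * P j i)) + ?H 3 (-?z) * (-(b * P j i))^3 / 3 + (?H 5 (X3 b j i) + ?H 5 (X4 b j i)) * (-(b * P j i))^5 / 120"
        using Tb[OF that] unfolding T_def Let_def X1_def X2_def X3_def X4_def by blast+
      show ?thesis unfolding e by (simp add: power_mult_distrib field_simps)
    qed
    have "0 = (\<Sum>j<5. \<Sum>i<5.
        (dH K \<mu> 0 (a b * G + b * P j i) - dH K \<mu> 0 (a b * G - b * P j i)) +
        (dH K \<mu> 0 (-(a b * G) + -(b * P j i)) - dH K \<mu> 0 (-(a b * G) - -(b * P j i))))"
      using D elim unfolding R_def by auto
    also have "\<dots> = (\<Sum>j<5. \<Sum>i<5. ((2 * ?H 1 ?z * b - 2 * ?H 1 (-?z) * b) * P j i + (?H 3 ?z * b^3 / 3 - ?H 3 (-?z) * b^3/3) * (P j i)^3)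
        + b^5 / 120 * ((?H 5 (X1 b j i) + ?H 5 (X2 b j i)) * (P j i)^5
        - (?H 5 (X3 b j i) + ?H 5 (X4 b j i)) * (P j i)^5))"
      by (intro sum.cong refl, rule split) auto
    also have "\<dots> = (\<Sum>j<5. \<Sum>i<5. ((2 * ?H 1 ?z * b - 2 * ?H 1 (-?z) * b) * P j i + (?H 3 ?z * b^3 / 3 - ?H 3 (-?z) * b^3/3) * (P j i)^3))
        + b^5 / 120 * E b"
      unfolding E_def by (simp add: sum.distrib sum_distrib_left)
    also have "\<dots> = b^5 / 120 * E b"
      using sum_lin_zero[OF P1 P3] by simp
    finally show ?case using elim unfolding R_def by simp
  qed
  have bnd: "\<bar>X1 b j i - a b * G\<bar> \<le> b * B \<and> \<bar>X2 b j i - a b * G\<bar> \<le> b * B \<and>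
             \<bar>X3 b j i - -(a b * G)\<bar> \<le> b * B \<and> \<bar>X4 b j i - -(a b * G)\<bar> \<le> b * B"
    if "R b" "j < 5" "i < 5" for b j i
  proof -
    have "\<bar>b * P j i\<bar> \<le> b * B" using PB[OF that(2,3)] that(1) unfolding R_def
      by (auto simp: abs_mult intro: mult_left_mono)
    then show ?thesis using Q[OF that] unfolding T_def Let_def X1_def X2_def X3_def X4_def by auto
  qed
  have lim_z: "((\<lambda>b. a b * G) \<longlongrightarrow> a0 * G) (at_right 0)" using alim by (intro tendsto_intros)
  have lim_bB: "((\<lambda>b. b * B) \<longlongrightarrow> 0) (at_right 0)"
    using tendsto_mult[OF tendsto_ident_at[of 0 "{0<..}"] tendsto_const[of B]] by simp
  have lim_lo: "((\<lambda>b. a b * G - b * B) \<longlongrightarrow> a0 * G) (at_right 0)"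
    using tendsto_diff[OF lim_z lim_bB] by simp
  have lim_hi: "((\<lambda>b. a b * G + b * B) \<longlongrightarrow> a0 * G) (at_right 0)"
    using tendsto_add[OF lim_z lim_bB] by simp
  have lim_lo': "((\<lambda>b. -(a b * G) - b * B) \<longlongrightarrow> -(a0 * G)) (at_right 0)"
    using tendsto_diff[OF tendsto_minus[OF lim_z] lim_bB] by simp
  have lim_hi': "((\<lambda>b. -(a b * G) + b * B) \<longlongrightarrow> -(a0 * G)) (at_right 0)"
    using tendsto_add[OF tendsto_minus[OF lim_z] lim_bB] by simp
  have aG: "a0 * G > 0" using a0 G by simp
  have Kp2: "2 * (a0 * G) < K" using Kpos by simp
  have c1: "isCont (?H 5) (a0 * G)"
    by (rule DERIV_isCont[OF dH_deriv]) (use Kpos in simp)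
  have c2: "isCont (?H 5) (-(a0 * G))"
    by (rule DERIV_isCont[OF dH_deriv]) (use Kp2 aG in simp)
  have L: "((\<lambda>b. ?H 5 (X1 b j i)) \<longlongrightarrow> ?H 5 (a0 * G)) (at_right 0) \<and>
           ((\<lambda>b. ?H 5 (X2 b j i)) \<longlongrightarrow> ?H 5 (a0 * G)) (at_right 0) \<and>
           ((\<lambda>b. ?H 5 (X3 b j i)) \<longlongrightarrow> ?H 5 (-(a0 * G))) (at_right 0) \<and>
           ((\<lambda>b. ?H 5 (X4 b j i)) \<longlongrightarrow> ?H 5 (-(a0 * G))) (at_right 0)"
    if "j < 5" "i < 5" for j i
  proof -
    have ev: "eventually (\<lambda>b. \<bar>X1 b j i - a b * G\<bar> \<le> b * B \<and> \<bar>X2 b j i - a b * G\<bar> \<le> b * B \<and>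
             \<bar>X3 b j i - -(a b * G)\<bar> \<le> b * B \<and> \<bar>X4 b j i - -(a b * G)\<bar> \<le> b * B) (at_right 0)"
      using evR by eventually_elim (use bnd that in blast)
    have t1: "((\<lambda>b. X1 b j i) \<longlongrightarrow> a0 * G) (at_right 0)"
      by (rule tendsto_sandwich[OF _ _ lim_lo lim_hi]) (use ev in \<open>eventually_elim, auto\<close>)+
    have t2: "((\<lambda>b. X2 b j i) \<longlongrightarrow> a0 * G) (at_right 0)"
      by (rule tendsto_sandwich[OF _ _ lim_lo lim_hi]) (use ev in \<open>eventually_elim, auto\<close>)+
    have t3: "((\<lambda>b. X3 b j i) \<longlongrightarrow> -(a0 * G)) (at_right 0)"
      by (rule tendsto_sandwich[OF _ _ lim_lo' lim_hi']) (use ev in \<open>eventually_elim, auto\<close>)+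
    have t4: "((\<lambda>b. X4 b j i) \<longlongrightarrow> -(a0 * G)) (at_right 0)"
      by (rule tendsto_sandwich[OF _ _ lim_lo' lim_hi']) (use ev in \<open>eventually_elim, auto\<close>)+
    show ?thesis
      using isCont_tendsto_compose[OF c1 t1] isCont_tendsto_compose[OF c1 t2]
        isCont_tendsto_compose[OF c2 t3] isCont_tendsto_compose[OF c2 t4] by blast
  qed
  let ?h1 = "?H 5 (a0 * G)" and ?h2 = "?H 5 (-(a0 * G))"
  have limE: "(E \<longlongrightarrow> (\<Sum>j<5. \<Sum>i<5. (?h1 + ?h1) * (P j i)^5 - (?h2 + ?h2) * (P j i)^5)) (at_right 0)"
    unfolding E_def[abs_def]
    by (intro tendsto_sum tendsto_diff tendsto_mult tendsto_add tendsto_const) (use L in auto)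
  have lim0: "(E \<longlongrightarrow> 0) (at_right 0)"
    using tendsto_eventually[OF E0ev] by simp
  have "(\<Sum>j<5. \<Sum>i<5. (?h1 + ?h1) * (P j i)^5 - (?h2 + ?h2) * (P j i)^5) = 0"
    using tendsto_unique[OF _ limE lim0] by simp
  moreover have "(\<Sum>j<5. \<Sum>i<5. (?h1 + ?h1) * (P j i)^5 - (?h2 + ?h2) * (P j i)^5)
      = (2 * ?h1 - 2 * ?h2) * (\<Sum>j<5. \<Sum>i<5. (P j i)^5)"
  proof -
    have "(\<Sum>j<5. \<Sum>i<5. (?h1 + ?h1) * (P j i)^5 - (?h2 + ?h2) * (P j i)^5)
       = (\<Sum>j<5. \<Sum>i<5. (2 * ?h1 - 2 * ?h2) * (P j i)^5)"
      by (intro sum.cong refl) (simp add: algebra_simps)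
    also have "\<dots> = (2 * ?h1 - 2 * ?h2) * (\<Sum>j<5. \<Sum>i<5. (P j i)^5)"
      by (simp only: sum_distrib_left)
    finally show ?thesis .
  qed
  ultimately have heq: "?h1 = ?h2" using P5 by simp
  have pK1: "K - 2 * (a0 * G) > 0" using Kpos by simp
  have pK2: "K - 2 * (-(a0 * G)) > 0" using Kp2 aG by simp
  show ?thesis
  proof (cases "(\<Prod>k<5. (\<mu> - real k)) = 0")
    case True
    then obtain k where "k < 5" "\<mu> = real k" by auto
    then show ?thesis by (auto simp: less_Suc_eq numeral_eq_Suc)
  next
    case False
    then have pe: "(K - 2 * (a0 * G)) powr (\<mu> - 5) = (K - 2 * (-(a0 * G))) powr (\<mu> - 5)"
      using heq unfolding dH_def by simp
    show ?thesis
    proof (rule ccontr)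
      assume "\<mu> \<notin> {0,1,2,3,4,5}"
      then have m5: "\<mu> - 5 \<noteq> 0" by auto
      have "ln ((K - 2 * (a0 * G)) powr (\<mu> - 5)) = ln ((K - 2 * (-(a0 * G))) powr (\<mu> - 5))"
        using pe by simp
      then have "(\<mu> - 5) * ln (K - 2 * (a0 * G)) = (\<mu> - 5) * ln (K - 2 * (-(a0 * G)))" by simp
      then have "ln (K - 2 * (a0 * G)) = ln (K - 2 * (-(a0 * G)))" using m5 by simp
      then have "K - 2 * (a0 * G) = K - 2 * (-(a0 * G))" using pK1 pK2 by simp
      then show False using a0 G by simp
    qed
  qed
qed



lemma vec3_eq: "(vector [a,b,c] :: real^3) = vector [d,e,f] \<longleftrightarrow> a=d \<and> b=e \<and> c=f"
  by (simp add: vec_eq_iff forall_3)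
lemma vec3_neg: "- (vector [a,b,c] :: real^3) = vector [-a,-b,-c]"
  by (simp add: vec_eq_iff forall_3)
lemma vec3_add: "(vector [a,b,c] :: real^3) + vector [d,e,f] = vector [a+d,b+e,c+f]"
  by (simp add: vec_eq_iff forall_3)
lemma vec3_diff: "(vector [a,b,c] :: real^3) - vector [d,e,f] = vector [a-d,b-e,c-f]"
  by (simp add: vec_eq_iff forall_3)
lemma vec3_scale: "r *\<^sub>R (vector [a,b,c] :: real^3) = vector [r*a,r*b,r*c]"
  by (simp add: vec_eq_iff forall_3)
lemma vec3_inner: "inner (vector [a,b,c] :: real^3) (vector [d,e,f]) = a*d+b*e+c*f"
  by (simp add: inner_vec_def sum_3)

lemma golden_sq: "golden^2 = golden + 1"
  unfolding golden_def by (simp add: power2_eq_square field_simps)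
lemma golden_gt1: "golden > 1"
proof -
  have "sqrt 5 > 1" by simp
  then show ?thesis unfolding golden_def by simp
qed
lemma golden_lt2: "golden < 2"
proof -
  have "sqrt 5 < 3" by (rule real_less_lsqrt) auto
  then show ?thesis unfolding golden_def by simp
qed

definition W :: "real^3" where "W = vector [0, 1, golden]"
definition xr :: "nat \<Rightarrow> real^3" where
  "xr i = (if i = 0 then vector [0, -1, golden] else if i = 1 then vector [golden, 0, 1]
     else if i = 2 then vector [1, golden, 0] else if i = 3 then vector [-1, golden, 0]
     else vector [-golden, 0, 1])"
definition Lst :: "(real^3) list" where
  "Lst = [W, -W] @ map xr [0..<5] @ map (\<lambda>i. - xr i) [0..<5]"

lemma Lst_explicit: "Lst = [vector [0, 1, golden], vector [0, -1, -golden],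
   vector [0, -1, golden], vector [golden, 0, 1], vector [1, golden, 0], vector [-1, golden, 0], vector [-golden, 0, 1],
   vector [0, 1, -golden], vector [-golden, 0, -1], vector [-1, -golden, 0], vector [1, -golden, 0], vector [golden, 0, -1]]"
  by (simp add: Lst_def W_def xr_def vec3_neg upt_rec)

lemma gmul1: "golden = t * golden \<longleftrightarrow> t = 1"
proof -
  have "golden \<noteq> 0" using golden_gt1 by simp
  then show ?thesis by (metis mult_cancel_right mult_1)
qed
lemma gmul2: "- golden = t * golden \<longleftrightarrow> t = -1"
proof -
  have "golden \<noteq> 0" using golden_gt1 by simp
  then show ?thesis by (metis mult_cancel_right mult_minus1 mult_minus_left mult_1)
qed

lemma std_eq: "std_icosahedron = set Lst"
  unfolding std_icosahedron_def Lst_explicit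
  by (auto simp: vec3_eq gmul1 gmul2)

lemma Lst_distinct: "distinct Lst"
  using golden_gt1 unfolding Lst_explicit by (auto simp: vec3_eq)

definition pv :: "nat \<Rightarrow> real^3" where "pv j = (golden + 2) *\<^sub>R xr j - golden *\<^sub>R W"
definition Pt :: "nat \<Rightarrow> nat \<Rightarrow> real" where "Pt j i = inner (pv j) (xr i)"

lemma less5: "(i::nat) < 5 \<Longrightarrow> i = 0 \<or> i = 1 \<or> i = 2 \<or> i = 3 \<or> i = 4" by auto

lemma sum5: "(\<Sum>j<(5::nat). f j) = f 0 + f 1 + f 2 + f 3 + (f 4 :: real)"
  by (simp add: numeral_eq_Suc)

lemma Pt_val: "Pt j i = (if i = 0 then (if j = 0 then 4*golden+4 else if j = 1 \<or> j = 4 then 2*golden else -4*golden-2)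
   else if i = 1 then (if j = 1 then 4*golden+4 else if j = 0 \<or> j = 2 then 2*golden else -4*golden-2)
   else if i = 2 then (if j = 2 then 4*golden+4 else if j = 1 \<or> j = 3 then 2*golden else -4*golden-2)
   else if i = 3 then (if j = 3 then 4*golden+4 else if j = 2 \<or> j = 4 then 2*golden else -4*golden-2)
   else (if j = 4 then 4*golden+4 else if j = 3 \<or> j = 0 then 2*golden else -4*golden-2))"
  if "i < 5" "j < 5" for i j
proof -
  have g: "golden^2 = golden + 1" by (rule golden_sq)
  show ?thesis
    using g that(2) unfolding Pt_def pv_def xr_def W_def
    by (auto simp: vec3_scale vec3_diff vec3_inner algebra_simps power2_eq_square)
qed

lemma P1: "\<forall>i<5. (\<Sum>j<5. Pt j i) = 0"
proof (intro allI impI)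
  fix i :: nat assume "i < 5"
  then show "(\<Sum>j<5. Pt j i) = 0"
    using golden_sq by (elim less5[elim_format]) (auto simp: sum5 Pt_val)
qed

lemma P3: "\<forall>i<5. (\<Sum>j<5. (Pt j i)^3) = 0"
proof (intro allI impI)
  fix i :: nat assume "i < 5"
  have g: "golden^2 = golden + 1" by (rule golden_sq)
  have e: "(4*golden+4)^3 + 2*(2*golden)^3 + 2*(-4*golden-2)^3 = 0"
    using g by algebra
  from \<open>i < 5\<close> show "(\<Sum>j<5. (Pt j i)^3) = 0"
    using e by (elim less5[elim_format]) (auto simp: sum5 Pt_val algebra_simps)
qed

lemma P5: "(\<Sum>j<5. \<Sum>i<5. (Pt j i)^5) \<noteq> 0"
proof -
  have g: "golden^2 = golden + 1" by (rule golden_sq)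
  have e: "5*((4*golden+4)^5 + 2*(2*golden)^5 + 2*(-4*golden-2)^5) = 88000*golden + 54400"
    using g by algebra
  have "(\<Sum>j<5. \<Sum>i<5. (Pt j i)^5) = 5*((4*golden+4)^5 + 2*(2*golden)^5 + 2*(-4*golden-2)^5)"
    by (simp add: sum5 Pt_val algebra_simps)
  then show ?thesis using e golden_gt1 by simp
qed

lemma WW: "inner W W = golden + 2"
  using golden_sq unfolding W_def by (simp add: vec3_inner power2_eq_square)
lemma Wxr: "i < 5 \<Longrightarrow> inner W (xr i) = golden"
  using golden_sq unfolding W_def xr_def by (simp add: vec3_inner power2_eq_square)
lemma xrxr: "i < 5 \<Longrightarrow> inner (xr i) (xr i) = golden + 2"
  using golden_sq unfolding xr_def by (simp add: vec3_inner power2_eq_square)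
lemma Wpv: "j < 5 \<Longrightarrow> inner W (pv j) = 0"
  unfolding pv_def by (simp add: inner_diff_right WW Wxr algebra_simps)
lemma pvpv: "j < 5 \<Longrightarrow> inner (pv j) (pv j) = 16 * golden + 12"
proof -
  assume j: "j < 5"
  have "inner (pv j) (pv j) = (golden+2)^2 * inner (xr j) (xr j) - 2*(golden+2)*golden * inner W (xr j)
     + golden^2 * inner W W"
    unfolding pv_def by (simp add: inner_diff_left inner_diff_right inner_commute power2_eq_square algebra_simps)
  also have "\<dots> = (golden+2)^2 * (golden+2) - 2*(golden+2)*golden * golden + golden^2 * (golden+2)"
    using j by (simp add: xrxr Wxr WW)
  also have "\<dots> = 16 * golden + 12" using golden_sq by algebra
  finally show ?thesis .
qed

lemma Lst_props: "x \<in> set Lst \<Longrightarrow> inner x x = golden + 2 \<and> (x = W \<or> inner x W \<le> golden)"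
  using golden_sq golden_gt1 unfolding Lst_explicit W_def
  by (auto simp: vec3_inner power2_eq_square)

lemma powr_sq: "(t::real) \<ge> 0 \<Longrightarrow> t powr lam = (t^2) powr (lam/2)"
proof -
  assume t: "t \<ge> 0"
  have "t^2 = t powr 2" using powr_realpow'[OF t, of 2] by simp
  then have "(t^2) powr (lam/2) = t powr (2 * (lam/2))" by (simp add: powr_powr)
  then show ?thesis by simp
qed

lemma Fsum:
  fixes y :: "real^3"
  assumes ny: "norm y = \<rho>"
  shows "(\<Sum>x\<in>std_icosahedron. dist y x powr lam) =
     dH (\<rho>^2 + (golden+2)) (lam/2) 0 (inner y W) + dH (\<rho>^2 + (golden+2)) (lam/2) 0 (inner y (-W))
     + (\<Sum>i<5. dH (\<rho>^2 + (golden+2)) (lam/2) 0 (inner y (xr i)))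
     + (\<Sum>i<5. dH (\<rho>^2 + (golden+2)) (lam/2) 0 (inner y (- xr i)))"
proof -
  let ?H = "dH (\<rho>^2 + (golden+2)) (lam/2) 0"
  have hterm: "dist y x powr lam = ?H (inner y x)" if "x \<in> set Lst" for x
  proof -
    have xx: "inner x x = golden + 2" using Lst_props[OF that] by simp
    have "(dist y x)^2 = inner (y - x) (y - x)" by (simp add: dist_norm power2_norm_eq_inner)
    also have "\<dots> = inner y y - 2 * inner y x + inner x x"
      by (simp add: inner_diff_left inner_diff_right inner_commute)
    also have "\<dots> = \<rho>^2 + (golden + 2) - 2 * inner y x"
      using ny xx by (simp add: power2_norm_eq_inner[symmetric])
    finally have "(dist y x)^2 = \<rho>^2 + (golden + 2) - 2 * inner y x" .
    then show ?thesis using powr_sq[of "dist y x" lam] by (simp add: dH_def)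
  qed
  have "(\<Sum>x\<in>std_icosahedron. dist y x powr lam) = (\<Sum>x\<in>set Lst. ?H (inner y x))"
    unfolding std_eq by (rule sum.cong) (auto simp: hterm)
  also have "\<dots> = sum_list (map (\<lambda>x. ?H (inner y x)) Lst)"
    by (rule sum_list_distinct_conv_sum_set[symmetric, OF Lst_distinct])
  also have "\<dots> = ?H (inner y W) + ?H (inner y (-W))
     + (\<Sum>i<5. ?H (inner y (xr i))) + (\<Sum>i<5. ?H (inner y (- xr i)))"
    unfolding Lst_def by (simp add: interv_sum_list_conv_sum_set_nat atLeast0LessThan add.assoc)
  finally show ?thesis .
qed

lemma pvW: "j < 5 \<Longrightarrow> inner (pv j) W = 0"
  by (metis inner_commute Wpv)

lemma Wxr_all: "inner W (xr i) = golden"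
  using golden_sq unfolding W_def xr_def by (simp add: vec3_inner power2_eq_square)

lemma std_main:
  fixes \<rho> lam C :: real
  assumes \<rho>: "\<rho> > 0"
    and hC: "\<forall>y. norm y = \<rho> \<and> y \<notin> std_icosahedron \<longrightarrow> (\<Sum>x\<in>std_icosahedron. dist y x powr lam) = C"
  shows "lam \<in> {0,2,4,6,8,10}"
proof -
  define K where "K = \<rho>^2 + (golden+2)"
  define A where "A = 16*golden + 12"
  define a where "a b = sqrt ((\<rho>^2 - A*b^2)/(golden+2))" for b
  define t where "t = sqrt (golden + 2)"
  define a0 where "a0 = \<rho> / t"
  let ?H = "dH K (lam/2) 0"
  have g1: "golden > 1" and g2: "golden < 2" using golden_gt1 golden_lt2 by auto
  have t0: "t > 0" unfolding t_def using g1 by simp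
  have t2: "t^2 = golden + 2" unfolding t_def using g1 by simp
  have a00: "a 0 = a0" unfolding a_def a0_def t_def using \<rho>
    by (simp add: real_sqrt_divide)
  have acont: "isCont a 0" unfolding a_def using g1 by (intro continuous_intros) simp
  have a0pos: "a0 > 0" unfolding a0_def using \<rho> t0 by simp
  have Kpos: "K - 2*a0*golden > 0"
  proof -
    have "2*\<rho>*golden < 2*\<rho>*t^2" using t2 \<rho> by simp
    also have "2*\<rho>*t^2 \<le> t * K"
    proof -
      have "t * K - 2*\<rho>*t^2 = t * (\<rho> - t)^2" unfolding K_def t2[symmetric] by (simp add: power2_eq_square algebra_simps)
      moreover have "t * (\<rho> - t)^2 \<ge> 0" using t0 by simp
      ultimately show ?thesis by linarith
    qed
    finally have "2*\<rho>*golden < t * K" .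
    then have "2*\<rho>*golden / t < K" using t0 by (simp add: divide_less_eq mult.commute)
    moreover have "2*a0*golden = 2*\<rho>*golden / t" unfolding a0_def by simp
    ultimately show ?thesis by simp
  qed
  define \<delta> where "\<delta> = \<rho> / 16"
  have \<delta>: "\<delta> > 0" unfolding \<delta>_def using \<rho> by simp
  have D: "\<forall>b. 0 < b \<and> b < \<delta> \<longrightarrow> (\<Sum>j<5. \<Sum>i<5.
        (?H (a b * golden + b * Pt j i) - ?H (a b * golden - b * Pt j i)) +
        (?H (-(a b * golden) + -(b * Pt j i)) - ?H (-(a b * golden) - -(b * Pt j i)))) = 0"
  proof (intro allI impI)
    fix b assume b: "0 < b \<and> b < \<delta>"
    have bb: "b^2 < (\<rho>/16)^2" using b unfolding \<delta>_def by (intro power_strict_mono) auto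
    have Ab: "A * b^2 < \<rho>^2 / 4"
    proof -
      have "A * b^2 \<le> 44 * b^2" unfolding A_def using g2 by (intro mult_right_mono) auto
      also have "\<dots> < 44 * (\<rho>/16)^2" using bb by simp
      also have "\<dots> \<le> \<rho>^2/4" by (simp add: power2_eq_square)
      finally show ?thesis .
    qed
    have A0: "A > 0" unfolding A_def using g1 by simp
    have rp: "\<rho>^2 - A*b^2 > 0"
    proof -
      have "\<rho>^2 > 0" using \<rho> by simp
      then show ?thesis using Ab by linarith
    qed
    have qp: "(\<rho>^2 - A*b^2)/(golden+2) > 0" using rp g1 by (intro divide_pos_pos) auto
    have nn: "(\<rho>^2 - A*b^2)/(golden+2) \<ge> 0" using qp by simp
    have ab2: "(a b)^2 = (\<rho>^2 - A*b^2)/(golden+2)" unfolding a_def using nn by simp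
    have abpos: "a b > 0" unfolding a_def using qp by simp
    show "(\<Sum>j<5. \<Sum>i<5.
        (?H (a b * golden + b * Pt j i) - ?H (a b * golden - b * Pt j i)) +
        (?H (-(a b * golden) + -(b * Pt j i)) - ?H (-(a b * golden) - -(b * Pt j i)))) = 0"
    proof (rule sum.neutral, intro ballI)
      fix j assume "j \<in> {..<(5::nat)}"
      then have j: "j < 5" by simp
      have yfacts: "norm y = \<rho> \<and> y \<notin> std_icosahedron" if y: "y = a b *\<^sub>R W + s *\<^sub>R pv j" and s: "s^2 = b^2" for y s
      proof -
        have yy: "inner y y = (a b)^2 * (golden + 2) + s^2 * A"
          unfolding y using j
          by (simp add: inner_add_left inner_add_right inner_commute WW Wpv pvpv A_def power2_eq_square algebra_simps)
        also have "\<dots> = \<rho>^2" using ab2 s g1 by (simp add: field_simps)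
        finally have yy2: "inner y y = \<rho>^2" .
        then have ny: "norm y = \<rho>" using \<rho> by (metis norm_eq_sqrt_inner real_sqrt_abs abs_of_pos)
        have "y \<notin> set Lst"
        proof
          assume ym: "y \<in> set Lst"
          from Lst_props[OF ym] have r: "\<rho>^2 = golden + 2" and c: "y = W \<or> inner y W \<le> golden"
            using yy2 by auto
          have yW: "inner y W = a b * (golden + 2)"
            unfolding y using j by (simp add: inner_add_left inner_diff_left WW pvW)
          show False
          proof (cases "y = W")
            case True
            have "inner y (pv j) = s * A" unfolding y using j
              by (simp add: inner_add_left Wpv pvpv A_def)
            moreover have "s \<noteq> 0" using s b by auto
            ultimately show False using True Wpv[OF j] A0 by (simp add: inner_commute)
          next
            case False
            then have le: "a b * (golden + 2) \<le> golden" using c yW by simp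
            have gp: "golden + 2 > 0" using g1 by simp
            have q: "A*b^2/(golden+2) < 1/4" using Ab r gp by (simp add: divide_less_eq)
            have "(a b)^2 = 1 - A*b^2/(golden+2)" using ab2 r gp by (simp add: diff_divide_distrib)
            then have "(a b)^2 > 3/4" using q by linarith
            then have "(a b * (golden+2))^2 > 3/4 * (golden+2)^2" using g1 by (simp add: power_mult_distrib)
            moreover have "3/4 * (golden+2)^2 \<ge> golden^2"
            proof -
              have h1: "golden^2 \<le> 2^2" using g1 g2 by (intro power_mono) auto
              have h2: "(3::real)^2 \<le> (golden+2)^2" using g1 by (intro power_mono) auto
              show ?thesis using h1 h2 by simp
            qed
            ultimately have "(a b * (golden+2))^2 > golden^2" by linarith
            moreover have "a b * (golden+2) \<ge> 0" using abpos g1 by simp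
            ultimately have "a b * (golden+2) > golden" using g1
              by (meson le less_le_trans not_le power_mono abs_of_nonneg) 
            then show False using le by simp
          qed
        qed
        then show ?thesis using ny std_eq by simp
      qed
      define yp where "yp = a b *\<^sub>R W + b *\<^sub>R pv j"
      define ym where "ym = a b *\<^sub>R W + (-b) *\<^sub>R pv j"
      have Cp: "(\<Sum>x\<in>std_icosahedron. dist yp x powr lam) = C" using hC yfacts[OF yp_def] by simp
      have Cm: "(\<Sum>x\<in>std_icosahedron. dist ym x powr lam) = C" using hC yfacts[OF ym_def] by simp
      have Fp: "(\<Sum>x\<in>std_icosahedron. dist yp x powr lam) = ?H (a b * (golden + 2)) + ?H (-(a b * (golden + 2)))
         + (\<Sum>i<5. ?H (a b * golden + b * Pt j i)) + (\<Sum>i<5. ?H (-(a b * golden) + -(b * Pt j i)))"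
      proof -
        have "norm yp = \<rho>" using yfacts[OF yp_def] by simp
        note F = Fsum[OF this, of lam, folded K_def]
        have e1: "inner yp W = a b * (golden + 2)" unfolding yp_def using j
          by (simp add: inner_add_left inner_diff_left WW pvW)
        have e2: "inner yp (-W) = -(a b * (golden + 2))" using e1 by simp
        have e3: "inner yp (xr i) = a b * golden + b * Pt j i" for i unfolding yp_def Pt_def
          by (simp add: inner_add_left inner_diff_left Wxr_all)
        have e4: "inner yp (-xr i) = -(a b * golden) + -(b * Pt j i)" for i using e3[of i] by simp
        show ?thesis unfolding F e1 e2 e3 e4 by simp
      qed
      have Fm: "(\<Sum>x\<in>std_icosahedron. dist ym x powr lam) = ?H (a b * (golden + 2)) + ?H (-(a b * (golden + 2)))
         + (\<Sum>i<5. ?H (a b * golden - b * Pt j i)) + (\<Sum>i<5. ?H (-(a b * golden) - -(b * Pt j i)))"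
      proof -
        have "norm ym = \<rho>" using yfacts[OF ym_def] by simp
        note F = Fsum[OF this, of lam, folded K_def]
        have e1: "inner ym W = a b * (golden + 2)" unfolding ym_def using j
          by (simp add: inner_add_left inner_diff_left WW pvW)
        have e2: "inner ym (-W) = -(a b * (golden + 2))" using e1 by simp
        have e3: "inner ym (xr i) = a b * golden - b * Pt j i" for i unfolding ym_def Pt_def
          by (simp add: inner_add_left inner_diff_left Wxr_all)
        have e4: "inner ym (-xr i) = -(a b * golden) - -(b * Pt j i)" for i using e3[of i] by simp
        show ?thesis unfolding F e1 e2 e3 e4 by simp
      qed
      show "(\<Sum>i<5.
        (?H (a b * golden + b * Pt j i) - ?H (a b * golden - b * Pt j i)) +
        (?H (-(a b * golden) + -(b * Pt j i)) - ?H (-(a b * golden) - -(b * Pt j i)))) = 0"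
        unfolding sum.distrib sum_subtractf using Cp Cm Fp Fm by linarith
    qed
  qed
  have "lam/2 \<in> {0,1,2,3,4,5}"
    by (rule core[OF g1[THEN less_trans[OF zero_less_one]] a0pos Kpos acont a00 \<delta> P1 P3 P5 D])
  then show ?thesis by auto
qed



theorem proposition5p2:
  fixes A :: "nat \<Rightarrow> real^3" and Ctr :: "real^3" and R :: real and lam :: real
  assumes "inj_on A {1..12}"
    and "regular_icosahedron (A ` {1..12}) Ctr"
    and "R > 0"
    and "\<exists>C. \<forall>M \<in> sphere Ctr R - A ` {1..12}. (\<Sum>i=1..12. dist M (A i) powr lam) = C"
  shows "lam \<in> {0, 2, 4, 6, 8, 10}"
proof -
  obtain C where hC: "\<forall>M \<in> sphere Ctr R - A ` {1..12}. (\<Sum>i=1..12. dist M (A i) powr lam) = C"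
    using assms(4) by blast
  obtain f c where f: "orthogonal_transformation f" and c: "c > 0"
    and V: "A ` {1..12} = (\<lambda>x. Ctr + c *\<^sub>R f x) ` std_icosahedron"
    using assms(2) unfolding regular_icosahedron_def by blast
  define \<phi> where "\<phi> x = Ctr + c *\<^sub>R f x" for x
  have lin: "linear f" using f by (simp add: orthogonal_transformation_linear)
  have nf: "norm (f x) = norm x" for x using f by (simp add: orthogonal_transformation_norm)
  have dphi: "dist (\<phi> y) (\<phi> x) = c * dist y x" for x y
  proof -
    have "\<phi> y - \<phi> x = c *\<^sub>R f (y - x)" unfolding \<phi>_def using lin
      by (simp add: linear_diff scaleR_diff_right)
    then show ?thesis using c by (simp add: dist_norm nf)
  qed
  have injphi: "inj \<phi>"
  proof (rule injI)
    fix x y assume "\<phi> x = \<phi> y"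
    then have "dist (\<phi> x) (\<phi> y) = 0" by simp
    then show "x = y" using dphi c by simp
  qed
  have V': "A ` {1..12} = \<phi> ` std_icosahedron" using V unfolding \<phi>_def[abs_def] .
  have "lam \<in> {0,2,4,6,8,10}"
  proof (rule std_main[of "R / c" lam "C / c powr lam"])
    show "R / c > 0" using assms(3) c by simp
    show "\<forall>y. norm y = R / c \<and> y \<notin> std_icosahedron \<longrightarrow>
        (\<Sum>x\<in>std_icosahedron. dist y x powr lam) = C / c powr lam"
    proof (intro allI impI)
      fix y assume y: "norm y = R / c \<and> y \<notin> std_icosahedron"
      have "dist Ctr (\<phi> y) = R" unfolding \<phi>_def using y c by (simp add: dist_norm nf)
      moreover have "\<phi> y \<notin> A ` {1..12}" unfolding V' using y injphi by (metis imageE injD)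
      ultimately have "\<phi> y \<in> sphere Ctr R - A ` {1..12}" by simp
      then have eq: "(\<Sum>i=1..12. dist (\<phi> y) (A i) powr lam) = C" using hC by blast
      have "(\<Sum>i=1..12. dist (\<phi> y) (A i) powr lam) = (\<Sum>v\<in>A ` {1..12}. dist (\<phi> y) v powr lam)"
        by (simp only: sum.reindex[OF assms(1)] comp_def)
      also have "\<dots> = (\<Sum>x\<in>std_icosahedron. dist (\<phi> y) (\<phi> x) powr lam)"
        unfolding V' by (simp only: sum.reindex[OF inj_on_subset[OF injphi subset_UNIV]] comp_def)
      also have "\<dots> = (\<Sum>x\<in>std_icosahedron. c powr lam * dist y x powr lam)"
        using c by (simp add: dphi powr_mult)
      also have "\<dots> = c powr lam * (\<Sum>x\<in>std_icosahedron. dist y x powr lam)"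
        by (simp add: sum_distrib_left)
      finally have "c powr lam * (\<Sum>x\<in>std_icosahedron. dist y x powr lam) = C" using eq by simp
      then show "(\<Sum>x\<in>std_icosahedron. dist y x powr lam) = C / c powr lam"
        using c by (simp add: field_simps)
    qed
  qed
  then show ?thesis .
qed

end
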